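(* For every function $g\in A$ with $g\not\equiv 0$ there exist an orthonormal system $\{\varphi_n\}_{n\ge1}$ on $[0,1]$ and a sequence $a=\{a_n\}\in\ell_2$ such that, with $d_k=1$ for all $k$, $$\limsup_{n\to\infty}\sum_{k=1}^{n}C_k^2(g)\log^2 k=\limsup_{n\to\infty}|U_n(g)|=+\infty,$$ where $C_k(g)=\int_0^1 g(x)\varphi_k(x)\,dx$ and $U_n(g)=\int_0^1 g(x)\sum_{k=1}^n d_k a_k\log k\,\varphi_k(x)\,dx=\sum_{k=1}^n a_k \log k\, C_k(g)$.
   Context: $A$ denotes the Banach space of absolutely continuous functions on $[0,1]$ with norm $\|f\|_A=\max_{[0,1]}|f|+\int_0^1|f'(x)|\,dx$. An orthonormal system on $[0,1]$ is a sequence of functions orthonormal in $L_2(0,1)$. $\log$ denotes the logarithm (so $\log 1=0$). *)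

theory Defs
  imports "HOL-Analysis.Analysis" "HOL-Library.Liminf_Limsup"
begin

definition abs_cont_01 :: "(real \<Rightarrow> real) \<Rightarrow> bool" where
  "abs_cont_01 f \<longleftrightarrow>
     (\<forall>\<epsilon>>0. \<exists>\<delta>>0. \<forall>(n::nat) (a::nat \<Rightarrow> real) (b::nat \<Rightarrow> real).
        (\<forall>i<n. 0 \<le> a i \<and> a i \<le> b i \<and> b i \<le> 1) \<longrightarrow>
        (\<forall>i<n. \<forall>j<n. i \<noteq> j \<longrightarrow> b i \<le> a j \<or> b j \<le> a i) \<longrightarrow>
        (\<Sum>i<n. b i - a i) < \<delta> \<longrightarrow>
        (\<Sum>i<n. \<bar>f (b i) - f (a i)\<bar>) < \<epsilon>)"

definition orthonormal_system_01 :: "(nat \<Rightarrow> real \<Rightarrow> real) \<Rightarrow> bool" where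
  "orthonormal_system_01 \<phi> \<longleftrightarrow>
     (\<forall>n\<ge>1. set_borel_measurable lebesgue {0..1} (\<phi> n)
            \<and> set_integrable lebesgue {0..1} (\<lambda>x. (\<phi> n x)\<^sup>2)) \<and>
     (\<forall>n\<ge>1. \<forall>m\<ge>1. (LINT x:{0..1}|lebesgue. \<phi> n x * \<phi> m x) = (if n = m then 1 else 0))"

definition coeffC :: "(nat \<Rightarrow> real \<Rightarrow> real) \<Rightarrow> (real \<Rightarrow> real) \<Rightarrow> nat \<Rightarrow> real" where
  "coeffC \<phi> g k = (LINT x:{0..1}|lebesgue. g x * \<phi> k x)"

end

theory Submission
  imports Defs
begin

definition kk :: "nat \<Rightarrow> nat" where "kk j = 3^(4^j)"
definition jj :: "nat \<Rightarrow> nat" where "jj k = (THE j. k = kk j)"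
definition slot :: "nat \<Rightarrow> nat" where
  "slot k = (if k \<in> range kk then 2 * jj k else 2 * k + 1)"

lemma kk_inj: "kk i = kk j \<Longrightarrow> i = j"
  unfolding kk_def by (simp add: power_inject_exp)

lemma jj_kk[simp]: "jj (kk j) = j"
  unfolding jj_def using kk_inj by blast

lemma kk_smono: "strict_mono kk"
  unfolding strict_mono_def kk_def
  by (intro allI impI power_strict_increasing) auto

lemma kk_ge1: "1 \<le> kk j"
  unfolding kk_def by simp

lemma ln_kk: "ln (real (kk j)) = 4^j * ln 3"
  unfolding kk_def by (simp add: ln_realpow)

lemma slot_kk[simp]: "slot (kk j) = 2 * j"
  unfolding slot_def by auto

lemma slot_inj: "slot n = slot m \<Longrightarrow> n = m"
  unfolding slot_def
  by (auto split: if_splits) presburger+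

definition pp :: "real \<Rightarrow> real \<Rightarrow> nat \<Rightarrow> real" where
  "pp \<alpha> L m = \<alpha> + L * (1 - (1/2)^m)"
definition TT :: "real \<Rightarrow> real \<Rightarrow> nat \<Rightarrow> real set" where
  "TT \<alpha> L m = {pp \<alpha> L m ..< pp \<alpha> L (Suc m)}"
definition ll :: "real \<Rightarrow> nat \<Rightarrow> real" where
  "ll L m = L * (1/2)^(Suc m)"

lemma pp_Suc: "pp \<alpha> L (Suc m) - pp \<alpha> L m = ll L m"
  unfolding pp_def ll_def by (simp add: algebra_simps)

lemma pp_mono: "0 \<le> L \<Longrightarrow> m \<le> m' \<Longrightarrow> pp \<alpha> L m \<le> pp \<alpha> L m'"
  unfolding pp_def by (auto intro!: mult_left_mono power_decreasing)

lemma pp_bounds: "0 \<le> L \<Longrightarrow> \<alpha> \<le> pp \<alpha> L m \<and> pp \<alpha> L m \<le> \<alpha> + L"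
proof -
  assume L: "0 \<le> L"
  have h: "0 \<le> (1/2::real)^m" "(1/2::real)^m \<le> 1" by (auto simp: power_le_one)
  have "0 \<le> L * (1 - (1/2)^m)" using L h by simp
  moreover have "L * (1 - (1/2)^m) \<le> L" using L h by (simp add: mult_left_le)
  ultimately show ?thesis unfolding pp_def by simp
qed

lemma TT_disj: "0 \<le> L \<Longrightarrow> m \<noteq> m' \<Longrightarrow> x \<in> TT \<alpha> L m \<Longrightarrow> x \<in> TT \<alpha> L m' \<Longrightarrow> False"
proof -
  assume L: "0 \<le> L" and ne: "m \<noteq> m'" and x: "x \<in> TT \<alpha> L m" "x \<in> TT \<alpha> L m'"
  show False
  proof (cases "m < m'")
    case True
    then have "pp \<alpha> L (Suc m) \<le> pp \<alpha> L m'" using pp_mono L by auto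
    then show False using x unfolding TT_def by auto
  next
    case False
    then have "m' < m" using ne by auto
    then have "pp \<alpha> L (Suc m') \<le> pp \<alpha> L m" using pp_mono L by auto
    then show False using x unfolding TT_def by auto
  qed
qed

lemma TT_sub: "0 \<le> \<alpha> \<Longrightarrow> \<alpha> + L \<le> 1 \<Longrightarrow> 0 \<le> L \<Longrightarrow> TT \<alpha> L m \<subseteq> {\<alpha>..<\<alpha>+L} \<inter> {0..1}"
  unfolding TT_def using pp_bounds[of L \<alpha> m] pp_bounds[of L \<alpha> "Suc m"] by auto

definition phi :: "real \<Rightarrow> real \<Rightarrow> nat \<Rightarrow> real \<Rightarrow> real" where
  "phi \<alpha> L k x = indicator (TT \<alpha> L (slot k)) x / sqrt (ll L (slot k))"

lemma lint_ind:
  assumes "0 \<le> u" "u \<le> v" "v \<le> 1"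
  shows "(LINT x:{0..1}|lebesgue. (c::real) * indicator {u..<v::real} x) = c * (v - u)"
proof -
  have "(\<lambda>x::real. indicator {0..1} x * (c * indicator {u..<v} x)) = (\<lambda>x. c * indicator {u..<v} x)"
    using assms by (auto simp: fun_eq_iff split: split_indicator)
  then show ?thesis using assms unfolding set_lebesgue_integral_def by simp
qed

lemma ons:
  assumes "0 \<le> \<alpha>" "\<alpha> + L \<le> 1" "0 < L"
  shows "orthonormal_system_01 (phi \<alpha> L)"
  unfolding orthonormal_system_01_def
proof (intro conjI allI impI)
  fix n :: nat
  show "set_borel_measurable lebesgue {0..1} (phi \<alpha> L n)"
    unfolding set_borel_measurable_def phi_def TT_def
    by (intro measurable_completion) measurable
  have ll: "ll L (slot n) > 0" using assms unfolding ll_def by simp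
  have sq: "(phi \<alpha> L n x)\<^sup>2 = (1 / ll L (slot n)) * indicator (TT \<alpha> L (slot n)) x" for x
    using ll unfolding phi_def by (auto simp: power_divide split: split_indicator)
  have sub: "TT \<alpha> L (slot n) \<subseteq> {0..1}" using TT_sub[OF assms(1,2), of "slot n"] assms(3) by auto
  show "set_integrable lebesgue {0..1} (\<lambda>x. (phi \<alpha> L n x)\<^sup>2)"
    unfolding set_integrable_def sq
  proof -
    have "(\<lambda>x. indicator {0..1} x *\<^sub>R (1 / ll L (slot n) * indicator (TT \<alpha> L (slot n)) x))
        = (\<lambda>x. 1 / ll L (slot n) * indicator (TT \<alpha> L (slot n)) x :: real)"
      using sub by (auto simp: fun_eq_iff split: split_indicator)
    moreover have "integrable lebesgue (\<lambda>x. 1 / ll L (slot n) * indicator (TT \<alpha> L (slot n)) x :: real)"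
      using pp_mono[of L "slot n" "Suc (slot n)" \<alpha>] assms
      unfolding TT_def by (intro integrable_mult_right integrable_real_indicator) auto
    ultimately show "integrable lebesgue (\<lambda>x. indicator {0..1} x *\<^sub>R (1 / ll L (slot n) * indicator (TT \<alpha> L (slot n)) x))"
      by simp
  qed
next
  fix n m :: nat
  have L: "0 \<le> L" using assms by simp
  show "(LINT x:{0..1}|lebesgue. phi \<alpha> L n x * phi \<alpha> L m x) = (if n = m then 1 else 0)"
  proof (cases "n = m")
    case True
    have ll: "ll L (slot n) > 0" using assms unfolding ll_def by simp
    have sq: "phi \<alpha> L n x * phi \<alpha> L n x = (1 / ll L (slot n)) * indicator (TT \<alpha> L (slot n)) x" for x
      using ll unfolding phi_def by (auto split: split_indicator)
    have b: "0 \<le> pp \<alpha> L (slot n)" "pp \<alpha> L (slot n) \<le> pp \<alpha> L (Suc (slot n))" "pp \<alpha> L (Suc (slot n)) \<le> 1"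
      using pp_bounds[OF L, of \<alpha> "slot n"] pp_bounds[OF L, of \<alpha> "Suc (slot n)"] pp_mono[OF L, of "slot n" "Suc (slot n)"] assms
      by auto
    have "(LINT x:{0..1}|lebesgue. phi \<alpha> L n x * phi \<alpha> L n x) = 1 / ll L (slot n) * ll L (slot n)"
      unfolding sq TT_def lint_ind[OF b] pp_Suc ..
    then show ?thesis using True ll by simp
  next
    case False
    then have "slot n \<noteq> slot m" using slot_inj by blast
    then have "phi \<alpha> L n x * phi \<alpha> L m x = 0" for x
      unfolding phi_def using TT_disj[OF L] by (auto split: split_indicator)
    then have "(\<lambda>x. indicator {0..1} x * (phi \<alpha> L n x * phi \<alpha> L m x)) = (\<lambda>x. 0::real)" by auto
    then show ?thesis using False unfolding set_lebesgue_integral_def by simp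
  qed
qed


lemma ac_unif:
  assumes "abs_cont_01 g" "0 < \<epsilon>"
  shows "\<exists>\<delta>>0. \<forall>x\<in>{0..1}. \<forall>y\<in>{0..1}. \<bar>x - y\<bar> < \<delta> \<longrightarrow> \<bar>g x - g y\<bar> < \<epsilon>"
proof -
  obtain \<delta> where d: "\<delta> > 0" and H: "\<And>(n::nat) (a::nat \<Rightarrow> real) (b::nat \<Rightarrow> real).
        (\<forall>i<n. 0 \<le> a i \<and> a i \<le> b i \<and> b i \<le> 1) \<Longrightarrow>
        (\<forall>i<n. \<forall>j<n. i \<noteq> j \<longrightarrow> b i \<le> a j \<or> b j \<le> a i) \<Longrightarrow>
        (\<Sum>i<n. b i - a i) < \<delta> \<Longrightarrow>
        (\<Sum>i<n. \<bar>g (b i) - g (a i)\<bar>) < \<epsilon>"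
    using assms unfolding abs_cont_01_def by blast
  show ?thesis
  proof (intro exI[of _ \<delta>] conjI d ballI impI)
    fix x y :: real assume xy: "x \<in> {0..1}" "y \<in> {0..1}" "\<bar>x - y\<bar> < \<delta>"
    have "(\<Sum>i<(1::nat). \<bar>g ((\<lambda>_. max x y) i) - g ((\<lambda>_. min x y) i)\<bar>) < \<epsilon>"
      using H[of 1 "\<lambda>_. min x y" "\<lambda>_. max x y"] xy by (auto simp: max_def min_def split: if_splits)
    then show "\<bar>g x - g y\<bar> < \<epsilon>"
      by (cases "x \<le> y") (auto simp: max_def min_def abs_minus_commute)
  qed
qed

lemma ac_cont: assumes "abs_cont_01 g" shows "continuous_on {0..1} g"
  unfolding continuous_on_iff dist_real_def
proof (intro ballI allI impI)
  fix x e :: real assume x: "x \<in> {0..1}" and e: "0 < e"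
  obtain d where d: "d > 0" "\<forall>x\<in>{0..1}. \<forall>y\<in>{0..1}. \<bar>x - y\<bar> < d \<longrightarrow> \<bar>g x - g y\<bar> < e"
    using ac_unif[OF assms e] by blast
  show "\<exists>d>0. \<forall>x'\<in>{0..1}. \<bar>x' - x\<bar> < d \<longrightarrow> \<bar>g x' - g x\<bar> < e"
    using d x by blast
qed

lemma ac_int: "abs_cont_01 g \<Longrightarrow> set_integrable lebesgue {0..1} g"
  using absolutely_integrable_continuous_real ac_cont by blast

lemma int_gphi:
  assumes "set_integrable lebesgue {0..1} g"
  shows "set_integrable lebesgue {0..1} (\<lambda>x. g x * phi \<alpha> L k x)"
proof -
  have e: "(\<lambda>x. indicator {0..1} x *\<^sub>R (g x * phi \<alpha> L k x))
     = (\<lambda>x. (indicator {0..1} x * g x / sqrt (ll L (slot k))) * indicator (TT \<alpha> L (slot k)) x)"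
    unfolding phi_def by (auto simp: fun_eq_iff)
  show ?thesis using assms unfolding set_integrable_def e TT_def
    by (intro integrable_real_mult_indicator integrable_divide) auto
qed

lemma coeff_lb:
  assumes "0 \<le> \<alpha>" "\<alpha> + L \<le> 1" "0 < L" and gi: "set_integrable lebesgue {0..1} g"
    and pos: "\<And>x. x \<in> {\<alpha>..<\<alpha>+L} \<Longrightarrow> c \<le> \<sigma> * g x"
  shows "c * sqrt (ll L (slot k)) \<le> \<sigma> * coeffC (phi \<alpha> L) g k"
proof -
  have L: "0 \<le> L" using assms by simp
  let ?T = "TT \<alpha> L (slot k)" and ?l = "ll L (slot k)"
  have ll: "?l > 0" using assms unfolding ll_def by simp
  have sub: "?T \<subseteq> {\<alpha>..<\<alpha>+L} \<inter> {0..1}" using TT_sub[OF assms(1,2) L] by blast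
  have b: "0 \<le> pp \<alpha> L (slot k)" "pp \<alpha> L (slot k) \<le> pp \<alpha> L (Suc (slot k))" "pp \<alpha> L (Suc (slot k)) \<le> 1"
    using pp_bounds[OF L, of \<alpha> "slot k"] pp_bounds[OF L, of \<alpha> "Suc (slot k)"] pp_mono[OF L, of "slot k" "Suc (slot k)"] assms
    by auto
  have "(LINT x:{0..1}|lebesgue. (c / sqrt ?l) * indicator ?T x) = c / sqrt ?l * ?l"
    unfolding TT_def lint_ind[OF b] pp_Suc ..
  also have "\<dots> = c * sqrt ?l" using ll
    by (metis less_eq_real_def real_div_sqrt times_divide_eq_left times_divide_eq_right)
  finally have eq1: "(LINT x:{0..1}|lebesgue. (c / sqrt ?l) * indicator ?T x) = c * sqrt ?l" .
  have i1: "set_integrable lebesgue {0..1} (\<lambda>x. (c / sqrt ?l) * indicator ?T x)"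
  proof -
    have "(\<lambda>x. indicator {0..1} x *\<^sub>R ((c / sqrt ?l) * indicator ?T x)) = (\<lambda>x. (c / sqrt ?l) * indicator ?T x :: real)"
      using sub by (auto simp: fun_eq_iff split: split_indicator)
    moreover have "integrable lebesgue (\<lambda>x. (c / sqrt ?l) * indicator ?T x :: real)"
      using b unfolding TT_def by (intro integrable_mult_right integrable_real_indicator) auto
    ultimately show ?thesis unfolding set_integrable_def by simp
  qed
  have i2: "set_integrable lebesgue {0..1} (\<lambda>x. \<sigma> * (g x * phi \<alpha> L k x))"
    using int_gphi[OF gi] by (rule set_integrable_mult_right)
  have "(LINT x:{0..1}|lebesgue. (c / sqrt ?l) * indicator ?T x) \<le> (LINT x:{0..1}|lebesgue. \<sigma> * (g x * phi \<alpha> L k x))"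
  proof (rule set_integral_mono[OF i1 i2])
    fix x :: real assume "x \<in> {0..1}"
    show "c / sqrt ?l * indicator ?T x \<le> \<sigma> * (g x * phi \<alpha> L k x)"
    proof (cases "x \<in> ?T")
      case True
      then have "c \<le> \<sigma> * g x" using pos sub by blast
      then have "c / sqrt ?l \<le> \<sigma> * g x / sqrt ?l" using ll by (simp add: divide_right_mono)
      then show ?thesis using True unfolding phi_def by simp
    next
      case False
      then show ?thesis unfolding phi_def by simp
    qed
  qed
  then show ?thesis unfolding eq1 coeffC_def by simp
qed

lemma lint_sum:
  assumes "\<And>k. set_integrable lebesgue {0..1} (\<lambda>x. g x * \<phi> k x)"
  shows "(LINT x:{0..1}|lebesgue. g x * (\<Sum>k\<in>K. b k * \<phi> k x)) = (\<Sum>k\<in>K. b k * coeffC \<phi> g k)"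
proof -
  have e: "(\<lambda>x. indicator {0..1} x *\<^sub>R (g x * (\<Sum>k\<in>K. b k * \<phi> k x)))
      = (\<lambda>x. \<Sum>k\<in>K. b k * (indicator {0..1} x * (g x * \<phi> k x)))"
    by (auto simp: fun_eq_iff sum_distrib_left algebra_simps)
  have ii: "integrable lebesgue (\<lambda>x. b k * (indicator {0..1} x * (g x * \<phi> k x)))" for k
    using assms[of k] unfolding set_integrable_def by simp
  have "integral\<^sup>L lebesgue (\<lambda>x. \<Sum>k\<in>K. b k * (indicator {0..1} x * (g x * \<phi> k x)))
     = (\<Sum>k\<in>K. integral\<^sup>L lebesgue (\<lambda>x. b k * (indicator {0..1} x * (g x * \<phi> k x))))"
    by (rule Bochner_Integration.integral_sum) (use ii in auto)
  then show ?thesis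
    unfolding set_lebesgue_integral_def coeffC_def e by simp
qed


lemma limsup_inf:
  fixes f :: "nat \<Rightarrow> real"
  assumes nn: "\<And>k. 0 \<le> f k" and K: "0 < K" and big: "\<And>j. K \<le> f (kk j)"
  shows "limsup (\<lambda>n. ereal (\<Sum>k=1..n. f k)) = \<infinity>"
proof -
  have "(\<lambda>n. ereal (\<Sum>k=1..n. f k)) \<longlonglongrightarrow> \<infinity>"
    unfolding Lim_PInfty
  proof
    fix B :: real
    obtain m :: nat where m0: "B / K \<le> real m"
      using real_arch_simple by blast
    then have m: "B \<le> real m * K" using K by (simp add: pos_divide_le_eq)
    show "\<exists>N. \<forall>n\<ge>N. ereal B \<le> ereal (\<Sum>k = 1..n. f k)"
    proof (intro exI allI impI)
      fix n assume n: "kk m \<le> n"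
      have sub: "kk ` {..<m} \<subseteq> {1..n}"
      proof
        fix y assume "y \<in> kk ` {..<m}"
        then obtain i where i: "i < m" "y = kk i" by auto
        have "kk i < kk m" using strict_monoD[OF kk_smono i(1)] .
        then show "y \<in> {1..n}" using kk_ge1[of i] n i(2) by simp
      qed
      have "real m * K = (\<Sum>i<m. K)" by simp
      also have "\<dots> \<le> (\<Sum>i<m. f (kk i))" by (intro sum_mono big)
      also have "\<dots> = (\<Sum>k\<in>kk ` {..<m}. f k)"
        using strict_mono_imp_inj_on[OF kk_smono] by (simp add: sum.reindex inj_on_subset)
      also have "\<dots> \<le> (\<Sum>k=1..n. f k)" by (rule sum_mono2[OF _ sub]) (auto simp: nn)
      finally show "ereal B \<le> ereal (\<Sum>k = 1..n. f k)" using m by simp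
    qed
  qed
  then show ?thesis by (intro lim_imp_Limsup) auto
qed


theorem theorem4:
  fixes g :: "real \<Rightarrow> real"
  assumes "abs_cont_01 g"
    and "\<exists>x\<in>{0..1}. g x \<noteq> 0"
  shows "\<exists>(\<phi>::nat \<Rightarrow> real \<Rightarrow> real) (a::nat \<Rightarrow> real).
           orthonormal_system_01 \<phi> \<and> summable (\<lambda>n. (a n)\<^sup>2) \<and>
           (let d = (\<lambda>k::nat. (1::real)) in
             limsup (\<lambda>n. ereal (\<Sum>k=1..n. (coeffC \<phi> g k)\<^sup>2 * (ln (real k))\<^sup>2)) = \<infinity> \<and>
             limsup (\<lambda>n. ereal \<bar>LINT x:{0..1}|lebesgue.
                         g x * (\<Sum>k=1..n. d k * a k * ln (real k) * \<phi> k x)\<bar>) = \<infinity> \<and>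
             (\<forall>n. (LINT x:{0..1}|lebesgue. g x * (\<Sum>k=1..n. d k * a k * ln (real k) * \<phi> k x))
                  = (\<Sum>k=1..n. a k * ln (real k) * coeffC \<phi> g k)))"
proof -
  obtain x0 where x0: "x0 \<in> {0..1}" "g x0 \<noteq> 0" using assms(2) by blast
  define \<sigma> where "\<sigma> = (if g x0 > 0 then 1 else -1::real)"
  define v where "v = \<bar>g x0\<bar>"
  have v: "v > 0" using x0 unfolding v_def by simp
  have sig2: "\<sigma> * \<sigma> = 1" unfolding \<sigma>_def by simp
  obtain \<delta> where d: "\<delta> > 0" and dH: "\<forall>x\<in>{0..1}. \<forall>y\<in>{0..1}. \<bar>x - y\<bar> < \<delta> \<longrightarrow> \<bar>g x - g y\<bar> < v/2"
    using ac_unif[OF assms(1), of "v/2"] v by auto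
  define L where "L = min \<delta> 1 / 2"
  define \<alpha> where "\<alpha> = (if x0 \<le> 1/2 then x0 else x0 - L)"
  have L: "0 < L" "L \<le> 1/2" "L < \<delta>" using d unfolding L_def by auto
  have al: "0 \<le> \<alpha>" "\<alpha> + L \<le> 1" using x0 L unfolding \<alpha>_def by auto
  define c where "c = v / 2"
  have c: "c > 0" using v unfolding c_def by simp
  have pos: "c \<le> \<sigma> * g x" if x: "x \<in> {\<alpha>..<\<alpha>+L}" for x
  proof -
    have "x \<in> {0..1}" "\<bar>x - x0\<bar> < \<delta>" using x al L unfolding \<alpha>_def by (auto split: if_splits)
    then have h: "\<bar>g x - g x0\<bar> < v/2" using dH x0 by blast
    show ?thesis
    proof (cases "0 < g x0")
      case True
      then have "\<sigma> = 1" "v = g x0" unfolding \<sigma>_def v_def by auto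
      then show ?thesis using h unfolding c_def abs_less_iff by auto
    next
      case False
      then have "\<sigma> = -1" "v = - g x0" unfolding \<sigma>_def v_def using x0(2) by auto
      then show ?thesis using h unfolding c_def abs_less_iff by auto
    qed
  qed
  have gi: "set_integrable lebesgue {0..1} g" using ac_int[OF assms(1)] .
  define \<phi> where "\<phi> = phi \<alpha> L"
  define a where "a k = (if k \<in> range kk then \<sigma> * (1/2)^(jj k) else 0)" for k
  have ons: "orthonormal_system_01 \<phi>" unfolding \<phi>_def using ons[OF al L(1)] .
  have CL: "c * sqrt (ll L (slot k)) \<le> \<sigma> * coeffC \<phi> g k" for k
    unfolding \<phi>_def using coeff_lb[OF al L(1) gi pos] by blast
  have sq: "sqrt (ll L (slot (kk j))) = sqrt (L/2) * (1/2)^j" for j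
  proof -
    have "ll L (slot (kk j)) = (L/2) * ((1/2)^j)\<^sup>2"
      unfolding ll_def by (simp add: power_mult[symmetric] power_add mult.commute)
    then have "sqrt (ll L (slot (kk j))) = sqrt (L/2) * sqrt (((1/2::real)^j)\<^sup>2)"
      by (simp only: real_sqrt_mult)
    then show ?thesis by simp
  qed
  have CLj: "c * sqrt (L/2) * (1/2)^j \<le> \<sigma> * coeffC \<phi> g (kk j)" for j
    using CL[of "kk j"] unfolding sq by (simp add: mult.assoc)
  have t0: "0 \<le> c * sqrt (L/2) * (1/2)^j" for j :: nat using c L by simp
  define f1 where "f1 k = (coeffC \<phi> g k)\<^sup>2 * (ln (real k))\<^sup>2" for k
  define f2 where "f2 k = a k * ln (real k) * coeffC \<phi> g k" for k
  define K1 where "K1 = (c * sqrt (L/2))\<^sup>2 * (ln 3)\<^sup>2"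
  define K2 where "K2 = c * sqrt (L/2) * ln 3"
  have K1: "K1 > 0" unfolding K1_def using c L by simp
  have K2: "K2 > 0" unfolding K2_def using c L by simp
  have f1nn: "0 \<le> f1 k" for k unfolding f1_def by simp
  have f1big: "K1 \<le> f1 (kk j)" for j
  proof -
    let ?s = "\<sigma> * coeffC \<phi> g (kk j)" and ?t = "c * sqrt (L/2) * (1/2)^j"
    have C2: "(coeffC \<phi> g (kk j))\<^sup>2 = ?s\<^sup>2" using sig2 by (simp add: power2_eq_square algebra_simps)
    have "?t\<^sup>2 \<le> ?s\<^sup>2" using CLj[of j] t0[of j] by (intro power_mono) auto
    have e: "?t\<^sup>2 * (4^j * ln 3)\<^sup>2 = K1 * (2^j)\<^sup>2"
    proof -
      have "(4::real)^(j*2) = (2^2)^(j*2)" by simp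
      also have "\<dots> = 2^(2*(j*2))" by (rule power_mult[symmetric])
      also have "\<dots> = 2^(j*4)" by (simp add: mult.commute)
      finally have p4: "(4::real)^(j*2) = 2^(j*4)" .
      show ?thesis
        unfolding K1_def by (simp add: power_mult_distrib power_divide field_simps p4 flip: power_mult power_add)
    qed
    have "K1 \<le> K1 * (2^j)\<^sup>2" using K1 by simp
    also have "\<dots> = ?t\<^sup>2 * (4^j * ln 3)\<^sup>2" using e by simp
    also have "\<dots> \<le> ?s\<^sup>2 * (4^j * ln 3)\<^sup>2" using \<open>?t\<^sup>2 \<le> ?s\<^sup>2\<close> by (intro mult_right_mono) auto
    also have "\<dots> = f1 (kk j)" unfolding f1_def C2 ln_kk ..
    finally show ?thesis .
  qed
  have f2nn: "0 \<le> f2 k" for k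
  proof (cases "k \<in> range kk")
    case True
    then obtain j where j: "k = kk j" by auto
    have "f2 k = (1/2)^j * (4^j * ln 3) * (\<sigma> * coeffC \<phi> g (kk j))"
      unfolding f2_def a_def j ln_kk by simp
    moreover have "0 \<le> \<sigma> * coeffC \<phi> g (kk j)" using CLj[of j] t0[of j] by linarith
    ultimately show ?thesis by simp
  next
    case False
    then show ?thesis unfolding f2_def a_def by simp
  qed
  have f2big: "K2 \<le> f2 (kk j)" for j
  proof -
    have eq: "f2 (kk j) = (1/2)^j * (4^j * ln 3) * (\<sigma> * coeffC \<phi> g (kk j))"
      unfolding f2_def a_def ln_kk by simp
    have e: "(1/2)^j * (4^j * ln 3) * (c * sqrt (L/2) * (1/2)^j) = K2"
    proof -
      have "(1/2::real)^j * 4^j * (1/2)^j = 1"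
        by (simp flip: power_mult_distrib)
      then show ?thesis unfolding K2_def by (simp add: algebra_simps)
    qed
    have "K2 \<le> (1/2)^j * (4^j * ln 3) * (\<sigma> * coeffC \<phi> g (kk j))"
      unfolding e[symmetric] using CLj[of j] by (intro mult_left_mono) auto
    then show ?thesis using eq by simp
  qed
  have int_id: "(LINT x:{0..1}|lebesgue. g x * (\<Sum>k=1..n. 1 * a k * ln (real k) * \<phi> k x))
                  = (\<Sum>k=1..n. a k * ln (real k) * coeffC \<phi> g k)" for n
    using lint_sum[of g \<phi> "\<lambda>k. 1 * a k * ln (real k)" "{1..n}"] int_gphi[OF gi] unfolding \<phi>_def
    by simp
  have summ: "summable (\<lambda>n. (a n)\<^sup>2)"
  proof -
    have aj: "(a (kk j))\<^sup>2 = (1/4::real)^j" for j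
    proof -
      have "(a (kk j))\<^sup>2 = (\<sigma>*\<sigma>) * ((1/2)^j*(1/2)^j)" unfolding a_def by (simp add: power2_eq_square algebra_simps)
      also have "\<dots> = (1/2 * (1/2))^j" using sig2 by (simp only: power_mult_distrib)
      finally show ?thesis by simp
    qed
    have "(\<lambda>j. (a (kk j))\<^sup>2) = (\<lambda>j. (1/4::real)^j)" using aj by auto
    moreover have "(\<lambda>j. (1/4::real)^j) sums (1 / (1 - 1/4))" by (rule geometric_sums) simp
    ultimately have "(\<lambda>j. (a (kk j))\<^sup>2) sums (1 / (1 - 1/4))" by simp
    then have "(\<lambda>n. (a n)\<^sup>2) sums (1 / (1 - 1/4))"
      by (subst (asm) sums_mono_reindex[OF kk_smono]) (auto simp: a_def)
    then show ?thesis by (rule sums_summable)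
  qed
  have l1: "limsup (\<lambda>n. ereal (\<Sum>k=1..n. (coeffC \<phi> g k)\<^sup>2 * (ln (real k))\<^sup>2)) = \<infinity>"
    using limsup_inf[of f1 K1, OF f1nn K1 f1big] unfolding f1_def .
  have eqf: "(\<lambda>n. ereal \<bar>LINT x:{0..1}|lebesgue. g x * (\<Sum>k=1..n. 1 * a k * ln (real k) * \<phi> k x)\<bar>)
       = (\<lambda>n. ereal (\<Sum>k=1..n. f2 k))"
    unfolding int_id f2_def[symmetric] using f2nn by (auto simp: fun_eq_iff sum_nonneg)
  have l2: "limsup (\<lambda>n. ereal \<bar>LINT x:{0..1}|lebesgue. g x * (\<Sum>k=1..n. 1 * a k * ln (real k) * \<phi> k x)\<bar>) = \<infinity>"
    unfolding eqf by (rule limsup_inf[of f2 K2, OF f2nn K2 f2big])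
  show ?thesis
    unfolding Let_def by (intro exI[of _ \<phi>] exI[of _ a] conjI ons summ l1 l2 allI int_id)
qed

end
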